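(* If a graph $G$ is a $k$-interval-PCG, then its complement $\overline{G}$ is a $(k+1)$-interval-PCG.
   Context: All trees are unrooted with edges weighted by nonnegative reals; $d_T(u,v)$ is the weight of the path between leaves $u,v$ of $T$. A graph $G$ is a $k$-interval-PCG if there exist a tree $T$ whose leaf set is $V(G)$ and $k$ pairwise disjoint intervals $I_1,\ldots,I_k$ of nonnegative reals such that $\{u,v\}\in E(G)$ iff $d_T(u,v)\in I_i$ for some $i$. The complement $\overline{G}$ has vertex set $V(G)$ and as edges exactly the non-edges of $G$. *)

theory Defs
  imports "HOL-Analysis.Analysis"
begin

definition simple_graph :: "'a set \<Rightarrow> 'a set set \<Rightarrow> bool" where
  "simple_graph V E \<longleftrightarrow> finite V \<and>
     (\<forall>e\<in>E. \<exists>u v. u \<in> V \<and> v \<in> V \<and> u \<noteq> v \<and> e = {u, v})"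

definition graph_complement :: "'a set \<Rightarrow> 'a set set \<Rightarrow> 'a set set" where
  "graph_complement V E = {{u, v} | u v. u \<in> V \<and> v \<in> V \<and> u \<noteq> v \<and> {u, v} \<notin> E}"

definition is_tree_path :: "'n set \<Rightarrow> 'n set set \<Rightarrow> 'n list \<Rightarrow> 'n \<Rightarrow> 'n \<Rightarrow> bool" where
  "is_tree_path TN TE p u v \<longleftrightarrow> p \<noteq> [] \<and> hd p = u \<and> last p = v \<and> distinct p \<and>
     set p \<subseteq> TN \<and> (\<forall>i. Suc i < length p \<longrightarrow> {p ! i, p ! Suc i} \<in> TE)"

definition weighted_tree :: "'n set \<Rightarrow> 'n set set \<Rightarrow> ('n set \<Rightarrow> real) \<Rightarrow> bool" where
  "weighted_tree TN TE w \<longleftrightarrow> finite TN \<and> TN \<noteq> {} \<and>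
     (\<forall>e\<in>TE. \<exists>x y. x \<in> TN \<and> y \<in> TN \<and> x \<noteq> y \<and> e = {x, y}) \<and>
     (\<forall>e\<in>TE. 0 \<le> w e) \<and>
     (\<forall>u\<in>TN. \<forall>v\<in>TN. \<exists>!p. is_tree_path TN TE p u v)"

definition path_weight :: "('n set \<Rightarrow> real) \<Rightarrow> 'n list \<Rightarrow> real" where
  "path_weight w p = (\<Sum>i < length p - 1. w {p ! i, p ! Suc i})"

definition tree_dist :: "'n set \<Rightarrow> 'n set set \<Rightarrow> ('n set \<Rightarrow> real) \<Rightarrow> 'n \<Rightarrow> 'n \<Rightarrow> real" where
  "tree_dist TN TE w u v = path_weight w (THE p. is_tree_path TN TE p u v)"

definition tree_leaves :: "'n set \<Rightarrow> 'n set set \<Rightarrow> 'n set" where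
  "tree_leaves TN TE = {x \<in> TN. card {e \<in> TE. x \<in> e} \<le> 1}"

text \<open>Tree nodes have type 'a + nat: the leaves are exactly the
  copies Inl v of the graph vertices, internal nodes are Inr i (w.l.o.g.).\<close>
definition k_interval_PCG :: "nat \<Rightarrow> 'a set \<Rightarrow> 'a set set \<Rightarrow> bool" where
  "k_interval_PCG k V E \<longleftrightarrow> simple_graph V E \<and>
     (\<exists>(TN :: ('a + nat) set) TE w (I :: nat \<Rightarrow> real set).
        weighted_tree TN TE w \<and> tree_leaves TN TE = Inl ` V \<and>
        (\<forall>i<k. is_interval (I i) \<and> I i \<subseteq> {0..}) \<and>
        (\<forall>i<k. \<forall>j<k. i \<noteq> j \<longrightarrow> I i \<inter> I j = {}) \<and>
        (\<forall>u\<in>V. \<forall>v\<in>V. u \<noteq> v \<longrightarrow>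
           ({u, v} \<in> E \<longleftrightarrow> (\<exists>i<k. tree_dist TN TE w (Inl u) (Inl v) \<in> I i))))"

end

theory Submission
  imports Defs
begin

lemma compl_intervals:
  fixes I :: "nat \<Rightarrow> real set"
  assumes "\<forall>i<k. is_interval (I i)"
  shows "\<exists>J :: nat \<Rightarrow> real set. (\<forall>j<k+1. is_interval (J j) \<and> J j \<subseteq> {0..}) \<and>
     (\<forall>i<k+1. \<forall>j<k+1. i \<noteq> j \<longrightarrow> J i \<inter> J j = {}) \<and>
     (\<forall>x. (\<exists>j<k+1. x \<in> J j) \<longleftrightarrow> (0 \<le> x \<and> \<not>(\<exists>i<k. x \<in> I i)))"
  using assms
proof (induction k)
  case 0
  show ?case
    by (rule exI[of _ "\<lambda>_. {0..}"]) (auto simp: is_interval_1)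
next
  case (Suc k)
  then obtain J :: "nat \<Rightarrow> real set" where
    Jc: "\<forall>j<k+1. is_interval (J j) \<and> J j \<subseteq> {0..}" and
    Jd: "\<forall>i<k+1. \<forall>j<k+1. i \<noteq> j \<longrightarrow> J i \<inter> J j = {}" and
    Ju: "\<forall>x. (\<exists>j<k+1. x \<in> J j) \<longleftrightarrow> (0 \<le> x \<and> \<not>(\<exists>i<k. x \<in> I i))"
    by auto
  define C where "C = I k"
  have Cc: "is_interval C" using Suc.prems C_def by auto
  define L where "L = {x. \<forall>c\<in>C. x < c}"
  define R where "R = {x. \<forall>c\<in>C. c < x}"
  have Lc: "is_interval L" unfolding L_def is_interval_1 by force
  have Rc: "is_interval R" unfolding R_def is_interval_1 by force
  have ex_iff: "(\<exists>i<Suc k. x \<in> I i) \<longleftrightarrow> (\<exists>i<k. x \<in> I i) \<or> x \<in> C" for x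
    unfolding C_def using less_Suc_eq by auto
  show ?case
  proof (cases "C \<noteq> {} \<and> (\<exists>a<k+1. J a \<inter> L \<noteq> {} \<and> J a \<inter> R \<noteq> {})")
    case True
    then obtain a c where a: "a < k+1" "J a \<inter> L \<noteq> {}" "J a \<inter> R \<noteq> {}" and c: "c \<in> C" by auto
    then obtain l r where l: "l \<in> J a" "l \<in> L" and r: "r \<in> J a" "r \<in> R" by auto
    have CJ: "C \<subseteq> J a"
    proof
      fix y assume "y \<in> C"
      then have "l \<le> y" "y \<le> r" using l r unfolding L_def R_def by force+
      then show "y \<in> J a" using Jc a(1) l r unfolding is_interval_1 by blast
    qed
    define J' where "J' = (J(a := J a \<inter> L))(k+1 := J a \<inter> R)"
    have LR: "L \<inter> R = {}" using c unfolding L_def R_def by force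
    have split: "J a - C = (J a \<inter> L) \<union> (J a \<inter> R)"
    proof (intro equalityI subsetI)
      fix x assume x: "x \<in> J a - C"
      show "x \<in> (J a \<inter> L) \<union> (J a \<inter> R)"
      proof (rule ccontr)
        assume "x \<notin> (J a \<inter> L) \<union> (J a \<inter> R)"
        then obtain c1 c2 where "c1 \<in> C" "c2 \<in> C" "c1 \<le> x" "x \<le> c2"
          using x unfolding L_def R_def by force
        then show False using x Cc unfolding is_interval_1 by blast
      qed
    next
      fix x assume "x \<in> (J a \<inter> L) \<union> (J a \<inter> R)"
      then show "x \<in> J a - C" unfolding L_def R_def by force
    qed
    show ?thesis
    proof (rule exI[of _ J'], intro conjI; intro allI impI)
      fix j assume j: "j < Suc k + 1"
      show "is_interval (J' j) \<and> J' j \<subseteq> {0..}"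
      proof -
        have Ja: "is_interval (J a)" "J a \<subseteq> {0..}" using Jc a(1) by auto
        have JL: "is_interval (J a \<inter> L)" using Ja(1) Lc by (rule is_interval_Int)
        have JR: "is_interval (J a \<inter> R)" using Ja(1) Rc by (rule is_interval_Int)
        show ?thesis
        proof (cases "j = k+1")
          case True then show ?thesis using JR Ja unfolding J'_def by auto
        next
          case F: False
          show ?thesis
          proof (cases "j = a")
            case True then show ?thesis using JL Ja F unfolding J'_def by auto
          next
            case False then have "j < k+1" using F j by auto
            then show ?thesis using Jc False F unfolding J'_def by auto
          qed
        qed
      qed
    next
      fix i j assume ij: "i < Suc k + 1" "j < Suc k + 1" "i \<noteq> j"
      have D: "J i \<inter> J j = {}" if "i < k+1" "j < k+1" "i \<noteq> j" for i j
        using Jd that by blast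
      have an: "a \<noteq> k+1" using a(1) by simp
      have J1: "J' (k+1) = J a \<inter> R" unfolding J'_def by simp
      have J2: "J' a = J a \<inter> L" unfolding J'_def using an by simp
      have J3: "J' m = J m" if "m \<noteq> k+1" "m \<noteq> a" for m unfolding J'_def using that by simp
      have JS: "J' m \<subseteq> J a" if "m = k+1 \<or> m = a" for m using that J1 J2 by auto
      have ik: "i = k+1 \<or> i < k+1" and jk: "j = k+1 \<or> j < k+1" using ij by auto
      show "J' i \<inter> J' j = {}"
      proof (cases "(i = k+1 \<and> j = a) \<or> (i = a \<and> j = k+1)")
        case True
        then show ?thesis using J1 J2 LR by auto
      next
        case F1: False
        show ?thesis
        proof (cases "i = k+1 \<or> i = a")
          case True
          then have jn1: "j \<noteq> k+1" and jn2: "j \<noteq> a" using F1 ij(3) by auto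
          have Jj: "J' j = J j" by (rule J3[OF jn1 jn2])
          have jl: "j < k+1" using jk jn1 by simp
          have "J j \<inter> J a = {}" by (rule D[OF jl a(1) jn2])
          then show ?thesis using JS[OF True] Jj by auto
        next
          case F2: False
          have in1: "i \<noteq> k+1" and in2: "i \<noteq> a" using F2 by simp_all
          have Ji: "J' i = J i" by (rule J3[OF in1 in2])
          have il: "i < k+1" using ik in1 by simp
          show ?thesis
          proof (cases "j = k+1 \<or> j = a")
            case True
            have "J i \<inter> J a = {}" by (rule D[OF il a(1) in2])
            then show ?thesis using JS[OF True] Ji by auto
          next
            case False
            then have jn1: "j \<noteq> k+1" and jn2: "j \<noteq> a" by simp_all
            have Jj: "J' j = J j" by (rule J3[OF jn1 jn2])
            have jl: "j < k+1" using jk jn1 by simp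
            have "J i \<inter> J j = {}" by (rule D[OF il jl ij(3)])
            then show ?thesis using Ji Jj by simp
          qed
        qed
      qed
    next
      fix x
      have "(\<exists>j<Suc k+1. x \<in> J' j) \<longleftrightarrow> (\<exists>j<k+1. x \<in> J j) \<and> x \<notin> C"
      proof
        assume "\<exists>j<Suc k+1. x \<in> J' j"
        then obtain j where j: "j < Suc k + 1" "x \<in> J' j" by auto
        show "(\<exists>j<k+1. x \<in> J j) \<and> x \<notin> C"
        proof (cases "j = k+1 \<or> j = a")
          case True
          then have "x \<in> J a - C" using split j a(1) unfolding J'_def by (auto split: if_splits)
          then show ?thesis using a(1) by auto
        next
          case False
          then have "x \<in> J j" "j < k+1" using j unfolding J'_def by auto
          moreover have "x \<notin> C" using CJ Jd a(1) calculation False by blast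
          ultimately show ?thesis by auto
        qed
      next
        assume h: "(\<exists>j<k+1. x \<in> J j) \<and> x \<notin> C"
        then obtain j where j: "j < k+1" "x \<in> J j" "x \<notin> C" by auto
        show "\<exists>j<Suc k+1. x \<in> J' j"
        proof (cases "j = a")
          case True
          then have "x \<in> (J a \<inter> L) \<union> (J a \<inter> R)" using split j by auto
          then show ?thesis
          proof
            assume "x \<in> J a \<inter> L" then show ?thesis using a(1) unfolding J'_def
              by (intro exI[of _ a]) auto
          next
            assume "x \<in> J a \<inter> R" then show ?thesis unfolding J'_def
              by (intro exI[of _ "k+1"]) auto
          qed
        next
          case False
          then show ?thesis using j unfolding J'_def by (intro exI[of _ j]) auto
        qed
      qed
      then show "(\<exists>j<Suc k+1. x \<in> J' j) \<longleftrightarrow> (0 \<le> x \<and> \<not>(\<exists>i<Suc k. x \<in> I i))"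
        using Ju ex_iff by auto
    qed
  next
    case False
    define J' where "J' = (\<lambda>j. J j - C)(k+1 := {})"
    have conv: "is_interval (J j - C)" if j: "j < k+1" for j
    proof (cases "C = {}")
      case True then show ?thesis using Jc j by auto
    next
      case Cne: False
      show ?thesis unfolding is_interval_1
      proof (intro ballI allI impI)
        fix p q x assume p: "p \<in> J j - C" and q: "q \<in> J j - C" and x: "p \<le> x \<and> x \<le> q"
        have xJ: "x \<in> J j" using Jc j p q x unfolding is_interval_1 by blast
        show "x \<in> J j - C"
        proof (rule ccontr)
          assume "x \<notin> J j - C"
          then have xC: "x \<in> C" using xJ by auto
          have "p \<in> L" unfolding L_def
          proof (intro CollectI ballI)
            fix c assume "c \<in> C"
            show "p < c"
            proof (rule ccontr)
              assume "\<not> p < c"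
              then have "c \<le> p" by auto
              then have "p \<in> C" using Cc \<open>c \<in> C\<close> xC x unfolding is_interval_1 by blast
              then show False using p by auto
            qed
          qed
          moreover have "q \<in> R" unfolding R_def
          proof (intro CollectI ballI)
            fix c assume "c \<in> C"
            show "c < q"
            proof (rule ccontr)
              assume "\<not> c < q"
              then have "q \<le> c" by auto
              then have "q \<in> C" using Cc \<open>c \<in> C\<close> xC x unfolding is_interval_1 by blast
              then show False using q by auto
            qed
          qed
          moreover have "p \<in> J j" "q \<in> J j" using p q by auto
          ultimately have "J j \<inter> L \<noteq> {}" "J j \<inter> R \<noteq> {}" by auto
          then have "C \<noteq> {} \<and> (\<exists>a<k+1. J a \<inter> L \<noteq> {} \<and> J a \<inter> R \<noteq> {})"
            using Cne j by auto
          then show False using False by simp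
        qed
      qed
    qed
    show ?thesis
    proof (rule exI[of _ J'], intro conjI; intro allI impI)
      fix j assume j: "j < Suc k + 1"
      show "is_interval (J' j) \<and> J' j \<subseteq> {0..}"
      proof (cases "j = k+1")
        case True then show ?thesis unfolding J'_def by (simp add: is_interval_empty)
      next
        case False
        then have jl: "j < k+1" using j by simp
        have "J' j = J j - C" unfolding J'_def using False by simp
        moreover have "J j \<subseteq> {0..}" using Jc jl by blast
        ultimately show ?thesis using conv[OF jl] by auto
      qed
    next
      fix i j assume ij: "i < Suc k + 1" "j < Suc k + 1" "i \<noteq> j"
      show "J' i \<inter> J' j = {}"
      proof (cases "i = k+1 \<or> j = k+1")
        case True then show ?thesis unfolding J'_def by auto
      next
        case False
        then have "i < k+1" "j < k+1" "J' i = J i - C" "J' j = J j - C" using ij unfolding J'_def by auto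
        moreover have "J i \<inter> J j = {}" using Jd calculation(1,2) ij(3) by blast
        ultimately show ?thesis by blast
      qed
    next
      fix x
      have "(\<exists>j<Suc k+1. x \<in> J' j) \<longleftrightarrow> (\<exists>j<k+1. x \<in> J j) \<and> x \<notin> C"
      proof
        assume "\<exists>j<Suc k+1. x \<in> J' j"
        then obtain j where j: "j < Suc k+1" "x \<in> J' j" by blast
        then have "j \<noteq> k+1" unfolding J'_def by auto
        then have "j < k+1" "x \<in> J j - C" using j unfolding J'_def by auto
        then show "(\<exists>j<k+1. x \<in> J j) \<and> x \<notin> C" by blast
      next
        assume "(\<exists>j<k+1. x \<in> J j) \<and> x \<notin> C"
        then obtain j where j: "j < k+1" "x \<in> J j" "x \<notin> C" by blast
        then have "x \<in> J' j" unfolding J'_def by auto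
        then show "\<exists>j<Suc k+1. x \<in> J' j" using j(1) by (intro exI[of _ j]) auto
      qed
      then show "(\<exists>j<Suc k+1. x \<in> J' j) \<longleftrightarrow> (0 \<le> x \<and> \<not>(\<exists>i<Suc k. x \<in> I i))"
        using Ju ex_iff by auto
    qed
  qed
qed

lemma tree_dist_nonneg:
  assumes "weighted_tree TN TE w" "u \<in> TN" "v \<in> TN"
  shows "0 \<le> tree_dist TN TE w u v"
proof -
  have "\<exists>!p. is_tree_path TN TE p u v" using assms unfolding weighted_tree_def by auto
  define p where "p = (THE p. is_tree_path TN TE p u v)"
  have P: "is_tree_path TN TE p u v" unfolding p_def by (rule theI') fact
  have "\<forall>i < length p - 1. {p ! i, p ! Suc i} \<in> TE" using P unfolding is_tree_path_def
    by auto
  then have "\<forall>i < length p - 1. 0 \<le> w {p ! i, p ! Suc i}" using assms(1) unfolding weighted_tree_def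
    by auto
  then show ?thesis unfolding tree_dist_def p_def[symmetric] path_weight_def
    by (intro sum_nonneg) auto
qed

lemma compl_mem:
  assumes "u \<in> V" "v \<in> V" "u \<noteq> v"
  shows "{u, v} \<in> graph_complement V E \<longleftrightarrow> {u, v} \<notin> E"
proof
  assume "{u, v} \<in> graph_complement V E"
  then obtain a b where "{u,v} = {a,b}" "{a,b} \<notin> E" unfolding graph_complement_def by blast
  then show "{u, v} \<notin> E" by simp
next
  assume "{u, v} \<notin> E"
  then show "{u, v} \<in> graph_complement V E" using assms unfolding graph_complement_def by blast
qed

theorem lemma3:
  fixes V :: "'a set" and E :: "'a set set" and k :: nat
  assumes "k_interval_PCG k V E"
  shows "k_interval_PCG (k + 1) V (graph_complement V E)"
proof -
  obtain TN :: "('a + nat) set" and TE w and I :: "nat \<Rightarrow> real set" where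
    sg: "simple_graph V E" and wt: "weighted_tree TN TE w" and lv: "tree_leaves TN TE = Inl ` V" and
    Ic: "\<forall>i<k. is_interval (I i) \<and> I i \<subseteq> {0..}" and
    ed: "\<forall>u\<in>V. \<forall>v\<in>V. u \<noteq> v \<longrightarrow>
           ({u, v} \<in> E \<longleftrightarrow> (\<exists>i<k. tree_dist TN TE w (Inl u) (Inl v) \<in> I i))"
  proof -
    have "simple_graph V E \<and> (\<exists>(TN :: ('a + nat) set) TE w (I :: nat \<Rightarrow> real set).
        weighted_tree TN TE w \<and> tree_leaves TN TE = Inl ` V \<and>
        (\<forall>i<k. is_interval (I i) \<and> I i \<subseteq> {0..}) \<and>
        (\<forall>i<k. \<forall>j<k. i \<noteq> j \<longrightarrow> I i \<inter> I j = {}) \<and>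
        (\<forall>u\<in>V. \<forall>v\<in>V. u \<noteq> v \<longrightarrow>
           ({u, v} \<in> E \<longleftrightarrow> (\<exists>i<k. tree_dist TN TE w (Inl u) (Inl v) \<in> I i))))"
      using assms unfolding k_interval_PCG_def .
    then show ?thesis using that by (elim conjE exE) blast
  qed
  obtain J :: "nat \<Rightarrow> real set" where
    Jc: "\<forall>j<k+1. is_interval (J j) \<and> J j \<subseteq> {0..}" and
    Jd: "\<forall>i<k+1. \<forall>j<k+1. i \<noteq> j \<longrightarrow> J i \<inter> J j = {}" and
    Ju: "\<forall>x. (\<exists>j<k+1. x \<in> J j) \<longleftrightarrow> (0 \<le> x \<and> \<not>(\<exists>i<k. x \<in> I i))"
    using compl_intervals[of k I] Ic by auto
  have sg2: "simple_graph V (graph_complement V E)"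
    using sg unfolding simple_graph_def graph_complement_def by blast
  have VT: "Inl u \<in> TN" if "u \<in> V" for u
  proof -
    have "Inl u \<in> tree_leaves TN TE" using lv that by auto
    then show ?thesis unfolding tree_leaves_def by auto
  qed
  have "\<forall>u\<in>V. \<forall>v\<in>V. u \<noteq> v \<longrightarrow>
           ({u, v} \<in> graph_complement V E \<longleftrightarrow> (\<exists>i<k+1. tree_dist TN TE w (Inl u) (Inl v) \<in> J i))"
  proof (intro ballI impI)
    fix u v assume uv: "u \<in> V" "v \<in> V" "u \<noteq> v"
    have "0 \<le> tree_dist TN TE w (Inl u) (Inl v)" using tree_dist_nonneg[OF wt VT VT] uv by auto
    then show "{u, v} \<in> graph_complement V E \<longleftrightarrow> (\<exists>i<k+1. tree_dist TN TE w (Inl u) (Inl v) \<in> J i)"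
      using compl_mem[OF uv, of E] ed uv Ju by auto
  qed
  then show ?thesis unfolding k_interval_PCG_def using sg2 wt lv Jc Jd by (intro conjI exI[of _ TN] exI[of _ TE] exI[of _ w] exI[of _ J]) auto
qed

end
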